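(* Let $\mathcal E=\widetilde{\Omega^1_D}(\mathcal A)$ be the bimodule of one-forms of a spectral triple $(\mathcal A,\mathcal H,D)$. Then $\mathcal E$ satisfies Assumption III if and only if it satisfies Assumption III$'$.
   Context: $\mathcal E$ is the span in $B(\mathcal H)$ of $a[D,b]$; $\mathcal Z(\mathcal E)=\{e:ea=ae\ \forall a\in\mathcal A\}$, $\mathcal Z(\mathcal A)$ the center of $\mathcal A$. Assumption III: $\mathcal Z(\mathcal E)$ is finitely generated projective over $\mathcal Z(\mathcal A)$ and $\mathcal Z(\mathcal E)\otimes_{\mathcal Z(\mathcal A)}\mathcal A\to\mathcal E$, $e\otimes a\mapsto ea$, is a vector space isomorphism. Assumption III$'$: there exist a unital $*$-subalgebra $\mathcal A'\subseteq\mathcal Z(\mathcal A)$ and an $\mathcal A'$-submodule $\mathcal E'\subseteq\mathcal Z(\mathcal E)$, finitely generated projective over $\mathcal A'$, such that $\mathcal E'\otimes_{\mathcal A'}\mathcal A\to\mathcal E$, $e\otimes a\mapsto ea$, is a vector space isomorphism. *)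

theory Defs
  imports Complex_Main
begin

text \<open>Abstract ambient complex *-algebra (playing the role of B(H)):
  a unital ring 'b with a central unital ring homomorphism sc from the complex
  numbers (scalar multiplication is x \<mapsto> sc c * x) and an involution st.\<close>

definition cstar_alg :: "(complex \<Rightarrow> 'b::ring_1) \<Rightarrow> ('b \<Rightarrow> 'b) \<Rightarrow> bool" where
  "cstar_alg sc st \<longleftrightarrow>
     sc 1 = 1 \<and> (\<forall>c d. sc (c + d) = sc c + sc d) \<and> (\<forall>c d. sc (c * d) = sc c * sc d)
   \<and> (\<forall>c x. sc c * x = x * sc c)
   \<and> (\<forall>x y. st (x + y) = st x + st y) \<and> (\<forall>x y. st (x * y) = st y * st x)
   \<and> (\<forall>x. st (st x) = x) \<and> (\<forall>c. st (sc c) = sc (cnj c))"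

definition unital_star_subalg :: "(complex \<Rightarrow> 'b::ring_1) \<Rightarrow> ('b \<Rightarrow> 'b) \<Rightarrow> 'b set \<Rightarrow> bool" where
  "unital_star_subalg sc st S \<longleftrightarrow>
     1 \<in> S \<and> (\<forall>x\<in>S. \<forall>y\<in>S. x + y \<in> S \<and> x * y \<in> S)
   \<and> (\<forall>c. \<forall>x\<in>S. sc c * x \<in> S) \<and> (\<forall>x\<in>S. st x \<in> S)"

text \<open>The map b \<mapsto> [D,b]: a complex-linear derivation from A into the ambient algebra.\<close>
definition derivation_on :: "(complex \<Rightarrow> 'b::ring_1) \<Rightarrow> 'b set \<Rightarrow> ('b \<Rightarrow> 'b) \<Rightarrow> bool" where
  "derivation_on sc A d \<longleftrightarrow>
     (\<forall>a\<in>A. \<forall>b\<in>A. d (a + b) = d a + d b \<and> d (a * b) = a * d b + d a * b)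
   \<and> (\<forall>c. \<forall>a\<in>A. d (sc c * a) = sc c * d a)"

inductive_set cspan :: "(complex \<Rightarrow> 'b::ring_1) \<Rightarrow> 'b set \<Rightarrow> 'b set"
  for sc :: "complex \<Rightarrow> 'b" and G :: "'b set" where
  cspan_zero: "0 \<in> cspan sc G"
| cspan_gen: "g \<in> G \<Longrightarrow> g \<in> cspan sc G"
| cspan_add: "x \<in> cspan sc G \<Longrightarrow> y \<in> cspan sc G \<Longrightarrow> x + y \<in> cspan sc G"
| cspan_scale: "x \<in> cspan sc G \<Longrightarrow> sc c * x \<in> cspan sc G"

definition one_forms :: "(complex \<Rightarrow> 'b::ring_1) \<Rightarrow> 'b set \<Rightarrow> ('b \<Rightarrow> 'b) \<Rightarrow> 'b set" where
  "one_forms sc A d = cspan sc {a * d b | a b. a \<in> A \<and> b \<in> A}"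

definition center_mod :: "'b::ring_1 set \<Rightarrow> 'b set \<Rightarrow> 'b set" where
  "center_mod A E = {e \<in> E. \<forall>a\<in>A. e * a = a * e}"

abbreviation center :: "'b::ring_1 set \<Rightarrow> 'b set" where
  "center A \<equiv> center_mod A A"

definition submod :: "'b::ring_1 set \<Rightarrow> 'b set \<Rightarrow> bool" where
  "submod R M \<longleftrightarrow> 0 \<in> M \<and> (\<forall>x\<in>M. \<forall>y\<in>M. x + y \<in> M) \<and> (\<forall>x\<in>M. \<forall>r\<in>R. x * r \<in> M)"

text \<open>Finitely generated projective: an R-module which is a direct summand
  (retract, via R-linear maps) of the free module R^n for some n.\<close>
definition free_mod :: "'b::ring_1 set \<Rightarrow> nat \<Rightarrow> (nat \<Rightarrow> 'b) set" where
  "free_mod R n = {v. (\<forall>i. v i \<in> R) \<and> (\<forall>i\<ge>n. v i = 0)}"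

definition fg_proj :: "'b::ring_1 set \<Rightarrow> 'b set \<Rightarrow> bool" where
  "fg_proj R M \<longleftrightarrow> submod R M \<and>
     (\<exists>(n::nat) (\<iota>::'b \<Rightarrow> nat \<Rightarrow> 'b) (\<pi>::(nat \<Rightarrow> 'b) \<Rightarrow> 'b).
        (\<forall>x\<in>M. \<iota> x \<in> free_mod R n)
      \<and> (\<forall>x\<in>M. \<forall>y\<in>M. \<iota> (x + y) = (\<lambda>i. \<iota> x i + \<iota> y i))
      \<and> (\<forall>x\<in>M. \<forall>r\<in>R. \<iota> (x * r) = (\<lambda>i. \<iota> x i * r))
      \<and> (\<forall>v\<in>free_mod R n. \<pi> v \<in> M)
      \<and> (\<forall>v\<in>free_mod R n. \<forall>w\<in>free_mod R n. \<pi> (\<lambda>i. v i + w i) = \<pi> v + \<pi> w)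
      \<and> (\<forall>v\<in>free_mod R n. \<forall>r\<in>R. \<pi> (\<lambda>i. v i * r) = \<pi> v * r)
      \<and> (\<forall>x\<in>M. \<pi> (\<iota> x) = x))"

text \<open>Tensor product M \<otimes>_R N realised as the free abelian group on M \<times> N modulo
  the subgroup generated by the bilinearity and R-balancing relations.\<close>
definition free_ab :: "'b::ring_1 set \<Rightarrow> 'b set \<Rightarrow> ('b \<times> 'b \<Rightarrow> int) set" where
  "free_ab M N = {f. finite {p. f p \<noteq> 0} \<and> (\<forall>p. f p \<noteq> 0 \<longrightarrow> fst p \<in> M \<and> snd p \<in> N)}"

definition delta :: "'b \<times> 'b \<Rightarrow> 'b \<times> 'b \<Rightarrow> int" where
  "delta p = (\<lambda>q. if q = p then 1 else 0)"

definition tensor_gens :: "'b::ring_1 set \<Rightarrow> 'b set \<Rightarrow> 'b set \<Rightarrow> ('b \<times> 'b \<Rightarrow> int) set" where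
  "tensor_gens R M N =
     {(\<lambda>q. delta (m + m', n) q - delta (m, n) q - delta (m', n) q) | m m' n. m \<in> M \<and> m' \<in> M \<and> n \<in> N}
   \<union> {(\<lambda>q. delta (m, n + n') q - delta (m, n) q - delta (m, n') q) | m n n'. m \<in> M \<and> n \<in> N \<and> n' \<in> N}
   \<union> {(\<lambda>q. delta (m * r, n) q - delta (m, r * n) q) | m r n. m \<in> M \<and> r \<in> R \<and> n \<in> N}"

inductive_set tensor_rel :: "'b::ring_1 set \<Rightarrow> 'b set \<Rightarrow> 'b set \<Rightarrow> ('b \<times> 'b \<Rightarrow> int) set"
  for R M N :: "'b set" where
  tensor_rel_zero: "(\<lambda>q. 0) \<in> tensor_rel R M N"
| tensor_rel_gen: "g \<in> tensor_gens R M N \<Longrightarrow> g \<in> tensor_rel R M N"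
| tensor_rel_diff: "f \<in> tensor_rel R M N \<Longrightarrow> g \<in> tensor_rel R M N \<Longrightarrow> (\<lambda>q. f q - g q) \<in> tensor_rel R M N"

definition mult_eval :: "('b \<times> 'b \<Rightarrow> int) \<Rightarrow> 'b::ring_1" where
  "mult_eval f = (\<Sum>p\<in>{p. f p \<noteq> 0}. of_int (f p) * (fst p * snd p))"

text \<open>The map M \<otimes>_R N \<rightarrow> E, m \<otimes> n \<mapsto> m n, is a (well-defined, valued in E) bijection.\<close>
definition mult_tensor_iso :: "'b::ring_1 set \<Rightarrow> 'b set \<Rightarrow> 'b set \<Rightarrow> 'b set \<Rightarrow> bool" where
  "mult_tensor_iso R M N E \<longleftrightarrow>
     (\<forall>m\<in>M. \<forall>n\<in>N. m * n \<in> E)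
   \<and> (\<forall>x\<in>E. \<exists>f\<in>free_ab M N. mult_eval f = x)
   \<and> (\<forall>f\<in>free_ab M N. mult_eval f = 0 \<longrightarrow> f \<in> tensor_rel R M N)"

definition assumption_III :: "'b::ring_1 set \<Rightarrow> 'b set \<Rightarrow> bool" where
  "assumption_III A E \<longleftrightarrow>
     fg_proj (center A) (center_mod A E) \<and> mult_tensor_iso (center A) (center_mod A E) A E"

definition assumption_III' :: "(complex \<Rightarrow> 'b::ring_1) \<Rightarrow> ('b \<Rightarrow> 'b) \<Rightarrow> 'b set \<Rightarrow> 'b set \<Rightarrow> bool" where
  "assumption_III' sc st A E \<longleftrightarrow>
     (\<exists>A' E'. unital_star_subalg sc st A' \<and> A' \<subseteq> center A
        \<and> E' \<subseteq> center_mod A E \<and> submod A' E' \<and> fg_proj A' E'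
        \<and> mult_tensor_iso A' E' A E)"

end

theory Submission
  imports Defs
begin


definition fs :: "('p \<Rightarrow> int) \<Rightarrow> bool" where "fs f \<longleftrightarrow> finite {p. f p \<noteq> 0}"

definition Lsum :: "('p \<Rightarrow> 'c::ring_1) \<Rightarrow> ('p \<Rightarrow> int) \<Rightarrow> 'c" where
  "Lsum g f = (\<Sum>p\<in>{p. f p \<noteq> 0}. of_int (f p) * g p)"

lemma Lsum_superset:
  assumes "finite S" "{p. f p \<noteq> 0} \<subseteq> S"
  shows "Lsum g f = (\<Sum>p\<in>S. of_int (f p) * g p)"
  unfolding Lsum_def
  by (rule sum.mono_neutral_left) (use assms in auto)

lemma fs_diff: "fs f \<Longrightarrow> fs g \<Longrightarrow> fs (\<lambda>q. f q - g q)"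
  unfolding fs_def by (rule finite_subset[of _ "{p. f p \<noteq> 0} \<union> {p. g p \<noteq> 0}"]) auto

lemma fs_add: "fs f \<Longrightarrow> fs g \<Longrightarrow> fs (\<lambda>q. f q + g q)"
  unfolding fs_def by (rule finite_subset[of _ "{p. f p \<noteq> 0} \<union> {p. g p \<noteq> 0}"]) auto

lemma fs_scale: "fs f \<Longrightarrow> fs (\<lambda>q. k * f q)"
  unfolding fs_def by (rule finite_subset[of _ "{p. f p \<noteq> 0}"]) auto

lemma fs_delta: "fs (delta p)"
  unfolding fs_def delta_def by (rule finite_subset[of _ "{p}"]) auto

lemma fs_zero: "fs (\<lambda>q. 0)" unfolding fs_def by simp

lemma fs_sum:
  assumes "finite I" "\<forall>i\<in>I. fs (F i)"
  shows "fs (\<lambda>q. \<Sum>i\<in>I. F i q)"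
  unfolding fs_def
proof (rule finite_subset[of _ "\<Union>i\<in>I. {p. F i p \<noteq> 0}"])
  show "{p. (\<Sum>i\<in>I. F i p) \<noteq> 0} \<subseteq> (\<Union>i\<in>I. {p. F i p \<noteq> 0})"
    by (auto elim: sum.not_neutral_contains_not_neutral)
  show "finite (\<Union>i\<in>I. {p. F i p \<noteq> 0})" using assms unfolding fs_def by auto
qed

lemma Lsum_sum:
  assumes "finite I" "\<forall>i\<in>I. fs (F i)"
  shows "Lsum g (\<lambda>q. \<Sum>i\<in>I. F i q) = (\<Sum>i\<in>I. Lsum g (F i))"
proof -
  let ?S = "\<Union>i\<in>I. {p. F i p \<noteq> 0}"
  have fin: "finite ?S" using assms unfolding fs_def by auto
  have "Lsum g (\<lambda>q. \<Sum>i\<in>I. F i q) = (\<Sum>p\<in>?S. of_int (\<Sum>i\<in>I. F i p) * g p)"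
    by (rule Lsum_superset[OF fin]) (auto elim: sum.not_neutral_contains_not_neutral)
  also have "\<dots> = (\<Sum>p\<in>?S. \<Sum>i\<in>I. of_int (F i p) * g p)" by (simp add: sum_distrib_right)
  also have "\<dots> = (\<Sum>i\<in>I. \<Sum>p\<in>?S. of_int (F i p) * g p)" by (rule sum.swap)
  also have "\<dots> = (\<Sum>i\<in>I. Lsum g (F i))"
    apply (rule sum.cong[OF refl])
    apply (rule Lsum_superset[symmetric])
    using fin assms by auto
  finally show ?thesis .
qed

lemma Lsum_diff:
  assumes "fs f" "fs h"
  shows "Lsum g (\<lambda>q. f q - h q) = Lsum g f - Lsum g h"
proof -
  let ?S = "{p. f p \<noteq> 0} \<union> {p. h p \<noteq> 0}"
  have fin: "finite ?S" using assms unfolding fs_def by auto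
  have "Lsum g (\<lambda>q. f q - h q) = (\<Sum>p\<in>?S. of_int (f p - h p) * g p)"
    by (rule Lsum_superset[OF fin]) auto
  also have "\<dots> = (\<Sum>p\<in>?S. of_int (f p) * g p) - (\<Sum>p\<in>?S. of_int (h p) * g p)"
    by (simp add: sum_subtractf left_diff_distrib)
  also have "\<dots> = Lsum g f - Lsum g h"
    using fin by (simp add: Lsum_superset[of ?S])
  finally show ?thesis .
qed

lemma Lsum_add:
  assumes "fs f" "fs h"
  shows "Lsum g (\<lambda>q. f q + h q) = Lsum g f + Lsum g h"
proof -
  let ?S = "{p. f p \<noteq> 0} \<union> {p. h p \<noteq> 0}"
  have fin: "finite ?S" using assms unfolding fs_def by auto
  have "Lsum g (\<lambda>q. f q + h q) = (\<Sum>p\<in>?S. of_int (f p + h p) * g p)"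
    by (rule Lsum_superset[OF fin]) auto
  also have "\<dots> = (\<Sum>p\<in>?S. of_int (f p) * g p) + (\<Sum>p\<in>?S. of_int (h p) * g p)"
    by (simp add: sum.distrib distrib_right)
  also have "\<dots> = Lsum g f + Lsum g h"
    using fin by (simp add: Lsum_superset[of ?S])
  finally show ?thesis .
qed

lemma Lsum_scale:
  assumes "fs f"
  shows "Lsum g (\<lambda>q. k * f q) = of_int k * Lsum g f"
proof -
  have fin: "finite {p. f p \<noteq> 0}" using assms unfolding fs_def by auto
  have "Lsum g (\<lambda>q. k * f q) = (\<Sum>p\<in>{p. f p \<noteq> 0}. of_int (k * f p) * g p)"
    by (rule Lsum_superset[OF fin]) auto
  also have "\<dots> = of_int k * Lsum g f"
    by (simp add: Lsum_def sum_distrib_left mult.assoc)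
  finally show ?thesis .
qed

lemma Lsum_delta: "Lsum g (delta p) = g p"
proof -
  have "{q. delta p q \<noteq> 0} = {p}" by (auto simp: delta_def)
  then show ?thesis by (simp add: Lsum_def delta_def)
qed

lemma Lsum_zero: "Lsum g (\<lambda>q. 0) = 0" by (simp add: Lsum_def)

lemma Lsum_comb:
  assumes "finite I"
  shows "Lsum g (\<lambda>q. \<Sum>i\<in>I. c i * delta (h i) q) = (\<Sum>i\<in>I. of_int (c i) * g (h i))"
  using assms by (simp add: Lsum_sum fs_scale fs_delta Lsum_scale Lsum_delta)

lemma Lsum_push:
  assumes "fs f"
  shows "Lsum g (\<lambda>q. \<Sum>p\<in>{p. f p \<noteq> 0}. f p * delta (h p) q) = Lsum (\<lambda>p. g (h p)) f"
proof -
  have "finite {p. f p \<noteq> 0}" using assms unfolding fs_def .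
  then have "Lsum g (\<lambda>q. \<Sum>p\<in>{p. f p \<noteq> 0}. f p * delta (h p) q) = (\<Sum>p\<in>{p. f p \<noteq> 0}. of_int (f p) * g (h p))"
    by (rule Lsum_comb)
  then show ?thesis unfolding Lsum_def[of "\<lambda>p. g (h p)"] .
qed

lemma fs_comb: "finite I \<Longrightarrow> fs (\<lambda>q. \<Sum>i\<in>I. c i * delta (h i) q)"
  by (simp add: fs_sum fs_scale fs_delta)

lemma comb_nz:
  assumes "(\<Sum>i\<in>I. c i * delta (h i) q) \<noteq> 0"
  shows "\<exists>i\<in>I. q = h i"
proof -
  obtain i where "i \<in> I" "c i * delta (h i) q \<noteq> 0"
    using assms by (auto elim: sum.not_neutral_contains_not_neutral)
  then show ?thesis by (auto simp: delta_def split: if_splits)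
qed

lemma gen1: "m \<in> M \<Longrightarrow> m' \<in> M \<Longrightarrow> n \<in> N \<Longrightarrow>
  (\<lambda>q. delta (m + m', n) q - delta (m, n) q - delta (m', n) q) \<in> tensor_rel R M N"
  by (rule tensor_rel_gen) (unfold tensor_gens_def, blast)

lemma gen2: "m \<in> M \<Longrightarrow> n \<in> N \<Longrightarrow> n' \<in> N \<Longrightarrow>
  (\<lambda>q. delta (m, n + n') q - delta (m, n) q - delta (m, n') q) \<in> tensor_rel R M N"
  by (rule tensor_rel_gen) (unfold tensor_gens_def, blast)

lemma gen3: "m \<in> M \<Longrightarrow> r \<in> R \<Longrightarrow> n \<in> N \<Longrightarrow>
  (\<lambda>q. delta (m * r, n) q - delta (m, r * n) q) \<in> tensor_rel R M N"
  by (rule tensor_rel_gen) (unfold tensor_gens_def, blast)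

lemma T_fs: "f \<in> tensor_rel R M N \<Longrightarrow> fs f"
proof (induct rule: tensor_rel.induct)
  case tensor_rel_zero then show ?case by (rule fs_zero)
next
  case (tensor_rel_gen g) then show ?case
    unfolding tensor_gens_def by (auto intro!: fs_diff fs_delta)
next
  case (tensor_rel_diff f g) then show ?case by (simp add: fs_diff)
qed

lemma Lsum_T:
  assumes "f \<in> tensor_rel R M N"
   and "\<And>m m' n. m\<in>M \<Longrightarrow> m'\<in>M \<Longrightarrow> n\<in>N \<Longrightarrow> g (m+m', n) = g (m,n) + g (m',n)"
   and "\<And>m n n'. m\<in>M \<Longrightarrow> n\<in>N \<Longrightarrow> n'\<in>N \<Longrightarrow> g (m, n+n') = g (m,n) + g (m,n')"
   and "\<And>m r n. m\<in>M \<Longrightarrow> r\<in>R \<Longrightarrow> n\<in>N \<Longrightarrow> g (m*r, n) = g (m, r*n)"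
  shows "Lsum g f = 0"
  using assms(1)
proof (induct rule: tensor_rel.induct)
  case tensor_rel_zero then show ?case by (rule Lsum_zero)
next
  case (tensor_rel_gen f) then show ?case
    unfolding tensor_gens_def
    by (auto simp: Lsum_diff fs_diff fs_delta Lsum_delta assms(2-4))
next
  case (tensor_rel_diff f g) then show ?case by (simp add: Lsum_diff T_fs)
qed

lemma T_neg: "f \<in> tensor_rel R M N \<Longrightarrow> (\<lambda>q. - f q) \<in> tensor_rel R M N"
  using tensor_rel_diff[OF tensor_rel_zero, of f R M N] by simp

lemma T_add: "f \<in> tensor_rel R M N \<Longrightarrow> g \<in> tensor_rel R M N \<Longrightarrow> (\<lambda>q. f q + g q) \<in> tensor_rel R M N"
  using tensor_rel_diff[of f R M N "\<lambda>q. - g q"] T_neg[of g] by simp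

lemma T_sum: "finite I \<Longrightarrow> \<forall>i\<in>I. F i \<in> tensor_rel R M N \<Longrightarrow> (\<lambda>q. \<Sum>i\<in>I. F i q) \<in> tensor_rel R M N"
proof (induct I rule: finite_induct)
  case empty then show ?case by (simp add: tensor_rel_zero)
next
  case (insert x F) then show ?case by (simp add: T_add)
qed

definition teq where "teq R M N f g \<longleftrightarrow> (\<lambda>q. f q - g q) \<in> tensor_rel R M N"

lemma teq_refl: "teq R M N f f"
  unfolding teq_def using tensor_rel_zero by simp

lemma teq_sym: "teq R M N f g \<Longrightarrow> teq R M N g f"
  unfolding teq_def using T_neg by fastforce

lemma teq_trans: "teq R M N f g \<Longrightarrow> teq R M N g h \<Longrightarrow> teq R M N f h"
  unfolding teq_def using T_add by fastforce

lemma teq_sum: "finite I \<Longrightarrow> \<forall>i\<in>I. teq R M N (F i) (G i) \<Longrightarrow>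
    teq R M N (\<lambda>q. \<Sum>i\<in>I. F i q) (\<lambda>q. \<Sum>i\<in>I. G i q)"
  unfolding teq_def using T_sum[of I "\<lambda>i q. F i q - G i q"] by (simp add: sum_subtractf)

lemma teq_neg: "teq R M N f g \<Longrightarrow> teq R M N (\<lambda>q. - f q) (\<lambda>q. - g q)"
  unfolding teq_def using T_neg by fastforce

lemma T_teq0: "f \<in> tensor_rel R M N \<longleftrightarrow> teq R M N f (\<lambda>q. 0)"
  unfolding teq_def by simp

lemma delta0_left: "0 \<in> M \<Longrightarrow> n \<in> N \<Longrightarrow> delta (0, n) \<in> tensor_rel R M N"
  using T_neg[OF gen1[of 0 M 0 n N R]] by simp

lemma delta0_right: "m \<in> M \<Longrightarrow> 0 \<in> N \<Longrightarrow> delta (m, 0) \<in> tensor_rel R M N"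
  using T_neg[OF gen2[of m M 0 N 0 R]] by simp

lemma delta_sum_left:
  assumes "finite S" "0 \<in> M" "\<And>x y. x \<in> M \<Longrightarrow> y \<in> M \<Longrightarrow> x + y \<in> M"
    "\<forall>i\<in>S. x i \<in> M" "n \<in> N"
  shows "teq R M N (delta (\<Sum>i\<in>S. x i, n)) (\<lambda>q. \<Sum>i\<in>S. delta (x i, n) q)"
  using assms(1,4)
proof (induct S rule: finite_induct)
  case empty then show ?case
    using delta0_left[OF assms(2,5)] by (simp add: T_teq0[symmetric])
next
  case (insert k S)
  have sM: "(\<Sum>i\<in>S. x i) \<in> M"
    using insert(1,4) assms(2,3) by (induct S rule: finite_induct) auto
  have "teq R M N (delta (x k + (\<Sum>i\<in>S. x i), n)) (\<lambda>q. delta (x k, n) q + delta (\<Sum>i\<in>S. x i, n) q)"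
    using gen1[of "x k" M "\<Sum>i\<in>S. x i" n N R] insert(4) sM assms(5)
    unfolding teq_def by (simp add: algebra_simps)
  moreover have "teq R M N (\<lambda>q. delta (x k, n) q + delta (\<Sum>i\<in>S. x i, n) q)
        (\<lambda>q. delta (x k, n) q + (\<Sum>i\<in>S. delta (x i, n) q))"
    using insert(3,4) unfolding teq_def by simp
  ultimately show ?case using insert(1,2) by (simp add: teq_trans)
qed

lemma delta_sum_right:
  assumes "finite S" "0 \<in> N" "\<And>x y. x \<in> N \<Longrightarrow> y \<in> N \<Longrightarrow> x + y \<in> N"
    "\<forall>i\<in>S. y i \<in> N" "m \<in> M"
  shows "teq R M N (delta (m, \<Sum>i\<in>S. y i)) (\<lambda>q. \<Sum>i\<in>S. delta (m, y i) q)"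
  using assms(1,4)
proof (induct S rule: finite_induct)
  case empty then show ?case
    using delta0_right[OF assms(5,2)] by (simp add: T_teq0[symmetric])
next
  case (insert k S)
  have sN: "(\<Sum>i\<in>S. y i) \<in> N"
    using insert(1,4) assms(2,3) by (induct S rule: finite_induct) auto
  have "teq R M N (delta (m, y k + (\<Sum>i\<in>S. y i))) (\<lambda>q. delta (m, y k) q + delta (m, \<Sum>i\<in>S. y i) q)"
    using gen2[of m M "y k" N "\<Sum>i\<in>S. y i" R] insert(4) sN assms(5)
    unfolding teq_def by (simp add: algebra_simps)
  moreover have "teq R M N (\<lambda>q. delta (m, y k) q + delta (m, \<Sum>i\<in>S. y i) q)
        (\<lambda>q. delta (m, y k) q + (\<Sum>i\<in>S. delta (m, y i) q))"
    using insert(3,4) unfolding teq_def by simp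
  ultimately show ?case using insert(1,2) by (simp add: teq_trans)
qed

lemma delta_bal: "m \<in> M \<Longrightarrow> r \<in> R \<Longrightarrow> n \<in> N \<Longrightarrow> teq R M N (delta (m * r, n)) (delta (m, r * n))"
  unfolding teq_def by (rule gen3)

lemma delta_scale:
  assumes "0 \<in> N" "\<And>x y. x \<in> N \<Longrightarrow> y \<in> N \<Longrightarrow> x + y \<in> N" "\<And>x. x \<in> N \<Longrightarrow> - x \<in> N"
    "m \<in> M" "c \<in> N"
  shows "teq R M N (\<lambda>q. k * delta (m, c) q) (delta (m, of_int k * c))"
proof -
  have nat: "teq R M N (\<lambda>q. int j * delta (m, c) q) (delta (m, of_nat j * c))" for j
  proof -
    have "teq R M N (delta (m, \<Sum>i<j. c)) (\<lambda>q. \<Sum>i<j. delta (m, c) q)"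
      by (rule delta_sum_right[OF finite_lessThan assms(1) assms(2)]) (simp_all add: assms(4,5))
    then show ?thesis by (simp add: teq_sym)
  qed
  have jN: "of_nat j * c \<in> N" for j
  proof (induct j)
    case 0 show ?case using assms(1) by (simp only: of_nat_0 mult_zero_left)
  next
    case (Suc j)
    have eq: "of_nat (Suc j) * c = c + of_nat j * c" by (simp add: algebra_simps)
    show ?case unfolding eq by (rule assms(2)[OF assms(5) Suc])
  qed
  have neg: "teq R M N (\<lambda>q. - delta (m, x) q) (delta (m, - x))" if "x \<in> N" for x
  proof -
    have "(\<lambda>q. delta (m, x + - x) q - delta (m, x) q - delta (m, - x) q) \<in> tensor_rel R M N"
      by (rule gen2) (use assms that in auto)
    then have "(\<lambda>q. delta (m, 0) q - delta (m, x) q - delta (m, - x) q) \<in> tensor_rel R M N" by simp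
    moreover have "delta (m, 0) \<in> tensor_rel R M N" by (rule delta0_right[OF assms(4,1)])
    ultimately have "(\<lambda>q. (delta (m, 0) q - delta (m, x) q - delta (m, - x) q) - delta (m, 0) q) \<in> tensor_rel R M N"
      by (rule tensor_rel_diff)
    then show ?thesis unfolding teq_def by (simp add: algebra_simps)
  qed
  show ?thesis
  proof (cases "k \<ge> 0")
    case True
    then obtain j where "k = int j" using nonneg_int_cases by blast
    then show ?thesis using nat[of j] by simp
  next
    case False
    define j where "j = nat (- k)"
    have kj: "k = - int j" using False unfolding j_def by simp
    have "teq R M N (\<lambda>q. - (int j * delta (m, c) q)) (\<lambda>q. - delta (m, of_nat j * c) q)"
      using teq_neg[OF nat[of j]] .
    moreover have "teq R M N (\<lambda>q. - delta (m, of_nat j * c) q) (delta (m, - (of_nat j * c)))"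
      by (rule neg[OF jN])
    ultimately show ?thesis using kj by (simp add: teq_trans)
  qed
qed



lemma sc0: "cstar_alg sc st \<Longrightarrow> sc 0 = 0"
proof -
  assume c: "cstar_alg sc st"
  have "sc (0 + 0) = sc 0 + sc 0" using c unfolding cstar_alg_def by blast
  then show ?thesis by simp
qed

lemma sc_neg1: "cstar_alg sc st \<Longrightarrow> sc (-1) = -1"
proof -
  assume c: "cstar_alg sc st"
  have "sc (1 + -1) = sc 1 + sc (-1)" using c unfolding cstar_alg_def by blast
  then have "0 = 1 + sc (-1)" using c sc0[OF c] unfolding cstar_alg_def by simp
  then show ?thesis by (simp add: eq_neg_iff_add_eq_0 add.commute)
qed

lemma cs_add: "cstar_alg sc st \<Longrightarrow> sc (c + d) = sc c + sc d"
  unfolding cstar_alg_def by blast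
lemma cs_one: "cstar_alg sc st \<Longrightarrow> sc 1 = 1"
  unfolding cstar_alg_def by blast
lemma cs_comm: "cstar_alg sc st \<Longrightarrow> sc c * x = x * sc c"
  unfolding cstar_alg_def by blast

lemma sc_of_int: "cstar_alg sc st \<Longrightarrow> sc (of_int k) = of_int k"
proof (induct k rule: int_induct[of _ 0])
  case base then show ?case using sc0 by simp
next
  case (step1 i)
  have "sc (of_int i + 1) = sc (of_int i) + sc 1" by (rule cs_add[OF step1(3)])
  then show ?case using step1(2)[OF step1(3)] cs_one[OF step1(3)] by simp
next
  case (step2 i)
  have "sc (of_int i + -1) = sc (of_int i) + sc (-1)" by (rule cs_add[OF step2(3)])
  then show ?case using step2(2)[OF step2(3)] sc_neg1[OF step2(3)] by simp
qed

locale subalg =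
  fixes sc :: "complex \<Rightarrow> 'b::ring_1" and st :: "'b \<Rightarrow> 'b" and S :: "'b set"
  assumes cs: "cstar_alg sc st" and sS: "unital_star_subalg sc st S"
begin
lemma S1: "1 \<in> S" using sS unfolding unital_star_subalg_def by blast
lemma Sadd: "x \<in> S \<Longrightarrow> y \<in> S \<Longrightarrow> x + y \<in> S" using sS unfolding unital_star_subalg_def by blast
lemma Smult: "x \<in> S \<Longrightarrow> y \<in> S \<Longrightarrow> x * y \<in> S" using sS unfolding unital_star_subalg_def by blast
lemma Ssc: "x \<in> S \<Longrightarrow> sc c * x \<in> S" using sS unfolding unital_star_subalg_def by blast
lemma S0: "0 \<in> S" using Ssc[OF S1, of 0] sc0[OF cs] by simp
lemma Sneg: "x \<in> S \<Longrightarrow> - x \<in> S" using Ssc[of x "-1"] sc_neg1[OF cs] by simp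
lemma Sofint: "x \<in> S \<Longrightarrow> of_int k * x \<in> S" using Ssc[of x "of_int k"] sc_of_int[OF cs] by simp
lemma Ssum: "finite I \<Longrightarrow> (\<forall>i\<in>I. F i \<in> S) \<Longrightarrow> sum F I \<in> S"
  by (induct I rule: finite_induct) (auto simp: S0 Sadd)
end

lemma free_ab_fs: "f \<in> free_ab M N \<Longrightarrow> fs f" unfolding free_ab_def fs_def by blast
lemma free_ab_mem: "f \<in> free_ab M N \<Longrightarrow> f p \<noteq> 0 \<Longrightarrow> fst p \<in> M \<and> snd p \<in> N"
  unfolding free_ab_def by blast
lemma free_abI: "fs f \<Longrightarrow> (\<And>p. f p \<noteq> 0 \<Longrightarrow> fst p \<in> M \<and> snd p \<in> N) \<Longrightarrow> f \<in> free_ab M N"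
  unfolding free_ab_def fs_def by blast
lemma mult_eval_Lsum: "mult_eval f = Lsum (\<lambda>p. fst p * snd p) f"
  unfolding mult_eval_def Lsum_def ..

locale bw =
  fixes sc :: "complex \<Rightarrow> 'b::ring_1" and st :: "'b \<Rightarrow> 'b" and A E A' E' :: "'b set"
    and n :: nat and \<iota> :: "'b \<Rightarrow> nat \<Rightarrow> 'b" and \<pi> :: "(nat \<Rightarrow> 'b) \<Rightarrow> 'b"
  assumes cs: "cstar_alg sc st" and sA: "unital_star_subalg sc st A"
    and E0: "0 \<in> E" and Eadd: "\<And>x y. x \<in> E \<Longrightarrow> y \<in> E \<Longrightarrow> x + y \<in> E"
    and Eright: "\<And>x a. x \<in> E \<Longrightarrow> a \<in> A \<Longrightarrow> x * a \<in> E"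
    and sA': "unital_star_subalg sc st A'" and A'Z: "A' \<subseteq> center A"
    and E'Z: "E' \<subseteq> center_mod A E"
    and \<iota>_in: "\<And>x. x\<in>E' \<Longrightarrow> \<iota> x \<in> free_mod A' n"
    and \<iota>_add: "\<And>x y. x\<in>E' \<Longrightarrow> y\<in>E' \<Longrightarrow> \<iota> (x + y) = (\<lambda>i. \<iota> x i + \<iota> y i)"
    and \<iota>_scale: "\<And>x r. x\<in>E' \<Longrightarrow> r\<in>A' \<Longrightarrow> \<iota> (x * r) = (\<lambda>i. \<iota> x i * r)"
    and \<pi>_in: "\<And>v. v\<in>free_mod A' n \<Longrightarrow> \<pi> v \<in> E'"
    and \<pi>_add: "\<And>v w. v\<in>free_mod A' n \<Longrightarrow> w\<in>free_mod A' n \<Longrightarrow> \<pi> (\<lambda>i. v i + w i) = \<pi> v + \<pi> w"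
    and \<pi>_scale: "\<And>v r. v\<in>free_mod A' n \<Longrightarrow> r\<in>A' \<Longrightarrow> \<pi> (\<lambda>i. v i * r) = \<pi> v * r"
    and \<pi>\<iota>: "\<And>x. x\<in>E' \<Longrightarrow> \<pi> (\<iota> x) = x"
    and iso: "mult_tensor_iso A' E' A E"
begin

interpretation A: subalg sc st A using cs sA by unfold_locales
interpretation A': subalg sc st A' using cs sA' by unfold_locales

lemma A'A: "x \<in> A' \<Longrightarrow> x \<in> A" using A'Z unfolding center_mod_def by blast
lemma A'c: "x \<in> A' \<Longrightarrow> a \<in> A \<Longrightarrow> x * a = a * x" using A'Z unfolding center_mod_def by blast
lemma E'E: "x \<in> E' \<Longrightarrow> x \<in> E" using E'Z unfolding center_mod_def by blast
lemma E'c: "x \<in> E' \<Longrightarrow> a \<in> A \<Longrightarrow> x * a = a * x" using E'Z unfolding center_mod_def by blast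

lemma iso_mem: "m \<in> E' \<Longrightarrow> a \<in> A \<Longrightarrow> m * a \<in> E" using iso unfolding mult_tensor_iso_def by blast
lemma iso_surj: "x \<in> E \<Longrightarrow> \<exists>f\<in>free_ab E' A. mult_eval f = x" using iso unfolding mult_tensor_iso_def by blast
lemma iso_inj: "f \<in> free_ab E' A \<Longrightarrow> mult_eval f = 0 \<Longrightarrow> f \<in> tensor_rel A' E' A"
  using iso unfolding mult_tensor_iso_def by blast

lemma Esum: "finite I \<Longrightarrow> (\<forall>i\<in>I. F i \<in> E) \<Longrightarrow> sum F I \<in> E"
  by (induct I rule: finite_induct) (auto simp: E0 Eadd)

definition dI :: "nat \<Rightarrow> nat \<Rightarrow> 'b" where "dI i = (\<lambda>j. if j = i then 1 else 0)"
definition b :: "nat \<Rightarrow> 'b" where "b i = \<pi> (dI i)"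

lemma dI_in: "i < n \<Longrightarrow> dI i \<in> free_mod A' n"
  unfolding free_mod_def dI_def using A'.S0 A'.S1 by auto

lemma b_in: "i < n \<Longrightarrow> b i \<in> E'" unfolding b_def by (rule \<pi>_in[OF dI_in])

lemma pi_expand:
  assumes v: "v \<in> free_mod A' n"
  shows "\<pi> v = (\<Sum>i<n. b i * v i)"
proof -
  have vA: "v i \<in> A'" for i using v unfolding free_mod_def by blast
  have v0: "i \<ge> n \<Longrightarrow> v i = 0" for i using v unfolding free_mod_def by blast
  have main: "k \<le> n \<Longrightarrow> (\<lambda>j. \<Sum>i<k. dI i j * v i) \<in> free_mod A' n
      \<and> \<pi> (\<lambda>j. \<Sum>i<k. dI i j * v i) = (\<Sum>i<k. b i * v i)" for k
  proof (induct k)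
    case 0
    have z: "(\<lambda>j. 0::'b) \<in> free_mod A' n" unfolding free_mod_def using A'.S0 by auto
    have "\<pi> (\<lambda>j. 0 * 0) = \<pi> (\<lambda>j. 0) * 0" by (rule \<pi>_scale[OF z A'.S0])
    then show ?case using z by simp
  next
    case (Suc k)
    let ?w = "\<lambda>j. \<Sum>i<k. dI i j * v i"
    let ?u = "\<lambda>j. dI k j * v k"
    have k: "k < n" using Suc by simp
    have IH: "?w \<in> free_mod A' n" "\<pi> ?w = (\<Sum>i<k. b i * v i)" using Suc by auto
    have u: "?u \<in> free_mod A' n" unfolding free_mod_def dI_def using vA A'.S0 k by auto
    have pu: "\<pi> ?u = b k * v k" unfolding b_def by (rule \<pi>_scale[OF dI_in[OF k] vA])
    have eq: "(\<lambda>j. \<Sum>i<Suc k. dI i j * v i) = (\<lambda>j. ?w j + ?u j)" by simp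
    have "(\<lambda>j. ?w j + ?u j) \<in> free_mod A' n"
      using IH(1) u A'.Sadd unfolding free_mod_def by auto
    moreover have "\<pi> (\<lambda>j. ?w j + ?u j) = (\<Sum>i<Suc k. b i * v i)"
      using \<pi>_add[OF IH(1) u] IH(2) pu by simp
    ultimately show ?case unfolding eq by blast
  qed
  have "(\<lambda>j. \<Sum>i<n. dI i j * v i) = v"
  proof
    fix j
    have "(\<Sum>i<n. dI i j * v i) = (\<Sum>i<n. if j = i then v i else 0)"
      unfolding dI_def by (rule sum.cong) auto
    also have "\<dots> = v j" using v0[of j] by (auto simp: sum.delta)
    finally show "(\<Sum>i<n. dI i j * v i) = v j" .
  qed
  then show ?thesis using main[of n] by simp
qed

lemma E'_expand: "m \<in> E' \<Longrightarrow> m = (\<Sum>i<n. b i * \<iota> m i)"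
  using pi_expand[OF \<iota>_in] \<pi>\<iota> by metis

lemma \<iota>A': "m \<in> E' \<Longrightarrow> \<iota> m i \<in> A'" using \<iota>_in unfolding free_mod_def by blast
lemma \<iota>0: "m \<in> E' \<Longrightarrow> i \<ge> n \<Longrightarrow> \<iota> m i = 0" using \<iota>_in unfolding free_mod_def by blast

definition Phi :: "nat \<Rightarrow> ('b \<times> 'b \<Rightarrow> int) \<Rightarrow> 'b" where
  "Phi i f = Lsum (\<lambda>p. \<iota> (fst p) i * snd p) f"
definition rep :: "'b \<Rightarrow> ('b \<times> 'b \<Rightarrow> int)" where
  "rep x = (SOME f. f \<in> free_ab E' A \<and> mult_eval f = x)"
definition phi :: "nat \<Rightarrow> 'b \<Rightarrow> 'b" where "phi i x = Phi i (rep x)"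

lemma rep_ok:
  assumes "x \<in> E" shows "rep x \<in> free_ab E' A \<and> mult_eval (rep x) = x"
proof -
  obtain f where "f \<in> free_ab E' A \<and> mult_eval f = x" using iso_surj[OF assms] by blast
  then show ?thesis unfolding rep_def by (rule someI[where P="\<lambda>f. f \<in> free_ab E' A \<and> mult_eval f = x"])
qed

lemma Phi_T: "f \<in> tensor_rel A' E' A \<Longrightarrow> Phi i f = 0"
  unfolding Phi_def
proof (rule Lsum_T)
  fix m m' a assume "m \<in> E'" "m' \<in> E'" "a \<in> A"
  then show "\<iota> (fst (m + m', a)) i * snd (m + m', a) = \<iota> (fst (m, a)) i * snd (m, a) + \<iota> (fst (m', a)) i * snd (m', a)"
    by (simp add: \<iota>_add distrib_right)
next
  fix m a a' show "\<iota> (fst (m, a + a')) i * snd (m, a + a') = \<iota> (fst (m, a)) i * snd (m, a) + \<iota> (fst (m, a')) i * snd (m, a')"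
    by (simp add: distrib_left)
next
  fix m r a assume "m \<in> E'" "r \<in> A'"
  then show "\<iota> (fst (m * r, a)) i * snd (m * r, a) = \<iota> (fst (m, r * a)) i * snd (m, r * a)"
    by (simp add: \<iota>_scale mult.assoc)
qed

lemma meval_E: "f \<in> free_ab E' A \<Longrightarrow> mult_eval f \<in> E"
  unfolding mult_eval_def
proof (rule Esum)
  assume f: "f \<in> free_ab E' A"
  then show "finite {p. f p \<noteq> 0}" using free_ab_fs fs_def by blast
  show "\<forall>p\<in>{p. f p \<noteq> 0}. of_int (f p) * (fst p * snd p) \<in> E"
  proof
    fix p assume "p \<in> {p. f p \<noteq> 0}"
    then have m: "fst p \<in> E'" "snd p \<in> A" using free_ab_mem[OF f] by auto
    have "of_int (f p) * (fst p * snd p) = fst p * (of_int (f p) * snd p)"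
      by (simp add: mult_of_int_commute mult.assoc)
    then show "of_int (f p) * (fst p * snd p) \<in> E" using iso_mem[OF m(1) A.Sofint[OF m(2)]] by simp
  qed
qed

lemma free_ab_diff:
  assumes "f \<in> free_ab M N" "g \<in> free_ab M N" shows "(\<lambda>q. f q - g q) \<in> free_ab M N"
proof (rule free_abI)
  show "fs (\<lambda>q. f q - g q)" by (rule fs_diff[OF free_ab_fs[OF assms(1)] free_ab_fs[OF assms(2)]])
  fix p assume "f p - g p \<noteq> 0"
  then have "f p \<noteq> 0 \<or> g p \<noteq> 0" by auto
  then show "fst p \<in> M \<and> snd p \<in> N" using free_ab_mem[OF assms(1)] free_ab_mem[OF assms(2)] by blast
qed
lemma free_ab_add:
  assumes "f \<in> free_ab M N" "g \<in> free_ab M N" shows "(\<lambda>q. f q + g q) \<in> free_ab M N"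
proof (rule free_abI)
  show "fs (\<lambda>q. f q + g q)" by (rule fs_add[OF free_ab_fs[OF assms(1)] free_ab_fs[OF assms(2)]])
  fix p assume "f p + g p \<noteq> 0"
  then have "f p \<noteq> 0 \<or> g p \<noteq> 0" by auto
  then show "fst p \<in> M \<and> snd p \<in> N" using free_ab_mem[OF assms(1)] free_ab_mem[OF assms(2)] by blast
qed

lemma phi_wd:
  assumes f: "f \<in> free_ab E' A"
  shows "phi i (mult_eval f) = Phi i f"
proof -
  define g where "g = rep (mult_eval f)"
  have g: "g \<in> free_ab E' A" "mult_eval g = mult_eval f" using rep_ok[OF meval_E[OF f]] unfolding g_def by auto
  have h: "(\<lambda>q. g q - f q) \<in> free_ab E' A" by (rule free_ab_diff[OF g(1) f])
  have fg: "fs g" "fs f" using free_ab_fs g(1) f by blast+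
  have "mult_eval (\<lambda>q. g q - f q) = mult_eval g - mult_eval f"
    by (simp only: mult_eval_Lsum Lsum_diff[OF fg])
  then have "mult_eval (\<lambda>q. g q - f q) = 0" using g(2) by simp
  then have "Phi i (\<lambda>q. g q - f q) = 0" by (rule Phi_T[OF iso_inj[OF h]])
  then show ?thesis unfolding phi_def g_def[symmetric] Phi_def Lsum_diff[OF fg] by simp
qed

end


lemma Lsum_cong: "(\<And>p. f p \<noteq> 0 \<Longrightarrow> g p = g' p) \<Longrightarrow> Lsum g f = Lsum g' f"
  unfolding Lsum_def by (rule sum.cong) auto

lemma Lsum_mult_right: "Lsum (\<lambda>p. g p * a) f = Lsum g f * a"
  unfolding Lsum_def by (simp add: sum_distrib_right mult.assoc)

lemma ofint_comm3: "of_int k * (a * y) = a * (of_int k * y)"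
  by (metis mult.assoc mult_of_int_commute)

lemma Lsum_mult_left: "Lsum (\<lambda>p. a * g p) f = a * Lsum g f"
  unfolding Lsum_def by (simp add: sum_distrib_left ofint_comm3)

lemma Lsum_0: "Lsum (\<lambda>p. 0) f = 0" unfolding Lsum_def by simp

context bw
begin

interpretation A: subalg sc st A using cs sA by unfold_locales
interpretation A': subalg sc st A' using cs sA' by unfold_locales

lemma push_free:
  assumes f: "f \<in> free_ab E' A"
    and h: "\<And>p. fst p \<in> E' \<Longrightarrow> snd p \<in> A \<Longrightarrow> fst (h p) \<in> E' \<and> snd (h p) \<in> A"
  shows "(\<lambda>q. \<Sum>p\<in>{p. f p \<noteq> 0}. f p * delta (h p) q) \<in> free_ab E' A"
proof (rule free_abI)
  have fin: "finite {p. f p \<noteq> 0}" using free_ab_fs[OF f] unfolding fs_def .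
  show "fs (\<lambda>q. \<Sum>p\<in>{p. f p \<noteq> 0}. f p * delta (h p) q)" by (rule fs_comb[OF fin])
  fix q assume "(\<Sum>p\<in>{p. f p \<noteq> 0}. f p * delta (h p) q) \<noteq> 0"
  then obtain p where p: "p \<in> {p. f p \<noteq> 0}" "q = h p" using comb_nz by blast
  then have "fst p \<in> E'" "snd p \<in> A" using free_ab_mem[OF f] by auto
  then show "fst q \<in> E' \<and> snd q \<in> A" using h p(2) by blast
qed

lemma rep_fs: "x \<in> E \<Longrightarrow> fs (rep x)" using rep_ok free_ab_fs by blast

lemma phi_right:
  assumes x: "x \<in> E" and a: "a \<in> A"
  shows "phi i (x * a) = phi i x * a"
proof -
  define f where "f = rep x"
  have f: "f \<in> free_ab E' A" "mult_eval f = x" using rep_ok[OF x] unfolding f_def by auto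
  have ffs: "fs f" using free_ab_fs[OF f(1)] .
  define F where "F = (\<lambda>q. \<Sum>p\<in>{p. f p \<noteq> 0}. f p * delta (fst p, snd p * a) q)"
  have F: "F \<in> free_ab E' A" unfolding F_def
    by (rule push_free[OF f(1)]) (simp add: A.Smult a)
  have "mult_eval F = Lsum (\<lambda>p. fst p * (snd p * a)) f"
    unfolding F_def mult_eval_Lsum Lsum_push[OF ffs] by simp
  also have "\<dots> = x * a" using f(2) unfolding mult_eval_Lsum
    by (simp add: mult.assoc[symmetric] Lsum_mult_right)
  finally have 1: "mult_eval F = x * a" .
  have "Phi i F = Lsum (\<lambda>p. \<iota> (fst p) i * (snd p * a)) f"
    unfolding F_def Phi_def Lsum_push[OF ffs] by simp
  also have "\<dots> = Phi i f * a" unfolding Phi_def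
    by (simp add: mult.assoc[symmetric] Lsum_mult_right)
  finally have 2: "Phi i F = Phi i f * a" .
  show ?thesis using phi_wd[OF F] 1 2 unfolding phi_def f_def by simp
qed

lemma phi_left:
  assumes x: "x \<in> E" and a: "a \<in> A"
  shows "phi i (a * x) = a * phi i x"
proof -
  define f where "f = rep x"
  have f: "f \<in> free_ab E' A" "mult_eval f = x" using rep_ok[OF x] unfolding f_def by auto
  have ffs: "fs f" using free_ab_fs[OF f(1)] .
  define F where "F = (\<lambda>q. \<Sum>p\<in>{p. f p \<noteq> 0}. f p * delta (fst p, a * snd p) q)"
  have F: "F \<in> free_ab E' A" unfolding F_def
    by (rule push_free[OF f(1)]) (simp add: A.Smult a)
  have "mult_eval F = Lsum (\<lambda>p. fst p * (a * snd p)) f"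
    unfolding F_def mult_eval_Lsum Lsum_push[OF ffs] by simp
  also have "\<dots> = Lsum (\<lambda>p. a * (fst p * snd p)) f"
  proof (rule Lsum_cong)
    fix p assume "f p \<noteq> 0"
    then have "fst p \<in> E'" using free_ab_mem[OF f(1)] by blast
    then show "fst p * (a * snd p) = a * (fst p * snd p)"
      using E'c[OF _ a] by (simp add: mult.assoc[symmetric])
  qed
  also have "\<dots> = a * x" using f(2) unfolding mult_eval_Lsum by (simp add: Lsum_mult_left)
  finally have 1: "mult_eval F = a * x" .
  have "Phi i F = Lsum (\<lambda>p. \<iota> (fst p) i * (a * snd p)) f"
    unfolding F_def Phi_def Lsum_push[OF ffs] by simp
  also have "\<dots> = Lsum (\<lambda>p. a * (\<iota> (fst p) i * snd p)) f"
  proof (rule Lsum_cong)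
    fix p assume "f p \<noteq> 0"
    then have "fst p \<in> E'" using free_ab_mem[OF f(1)] by blast
    then have "\<iota> (fst p) i * a = a * \<iota> (fst p) i" using A'c[OF \<iota>A' a] by blast
    then show "\<iota> (fst p) i * (a * snd p) = a * (\<iota> (fst p) i * snd p)"
      by (simp add: mult.assoc[symmetric])
  qed
  also have "\<dots> = a * Phi i f" unfolding Phi_def by (simp add: Lsum_mult_left)
  finally have 2: "Phi i F = a * Phi i f" .
  show ?thesis using phi_wd[OF F] 1 2 unfolding phi_def f_def by simp
qed

lemma phi_A:
  assumes x: "x \<in> E" shows "phi i x \<in> A"
proof -
  define f where "f = rep x"
  have f: "f \<in> free_ab E' A" using rep_ok[OF x] unfolding f_def by auto
  have "Phi i f \<in> A" unfolding Phi_def Lsum_def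
  proof (rule A.Ssum)
    show "finite {p. f p \<noteq> 0}" using free_ab_fs[OF f] unfolding fs_def .
    show "\<forall>p\<in>{p. f p \<noteq> 0}. of_int (f p) * (\<iota> (fst p) i * snd p) \<in> A"
    proof
      fix p assume "p \<in> {p. f p \<noteq> 0}"
      then have m: "fst p \<in> E'" "snd p \<in> A" using free_ab_mem[OF f] by auto
      show "of_int (f p) * (\<iota> (fst p) i * snd p) \<in> A"
        by (rule A.Sofint[OF A.Smult[OF A'A[OF \<iota>A'[OF m(1)]] m(2)]])
    qed
  qed
  then show ?thesis unfolding phi_def f_def .
qed

lemma phi_big:
  assumes x: "x \<in> E" and i: "i \<ge> n" shows "phi i x = 0"
proof -
  define f where "f = rep x"
  have f: "f \<in> free_ab E' A" using rep_ok[OF x] unfolding f_def by auto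
  have "Phi i f = Lsum (\<lambda>p. 0) f" unfolding Phi_def
  proof (rule Lsum_cong)
    fix p assume "f p \<noteq> 0"
    then have "fst p \<in> E'" using free_ab_mem[OF f] by blast
    then show "\<iota> (fst p) i * snd p = 0" using \<iota>0 i by simp
  qed
  then show ?thesis unfolding phi_def f_def[symmetric] Lsum_0 .
qed

lemma phi_add:
  assumes x: "x \<in> E" and y: "y \<in> E" shows "phi i (x + y) = phi i x + phi i y"
proof -
  define f where "f = rep x"
  define g where "g = rep y"
  have f: "f \<in> free_ab E' A" "mult_eval f = x" using rep_ok[OF x] unfolding f_def by auto
  have g: "g \<in> free_ab E' A" "mult_eval g = y" using rep_ok[OF y] unfolding g_def by auto
  have fg: "fs f" "fs g" using free_ab_fs f(1) g(1) by blast+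
  have F: "(\<lambda>q. f q + g q) \<in> free_ab E' A" by (rule free_ab_add[OF f(1) g(1)])
  have "mult_eval (\<lambda>q. f q + g q) = mult_eval f + mult_eval g"
    by (simp only: mult_eval_Lsum Lsum_add[OF fg])
  then have 1: "mult_eval (\<lambda>q. f q + g q) = x + y" using f(2) g(2) by simp
  have "Phi i (\<lambda>q. f q + g q) = Phi i f + Phi i g" unfolding Phi_def by (rule Lsum_add[OF fg])
  then show ?thesis using phi_wd[OF F] 1 unfolding phi_def f_def g_def by simp
qed

lemma phi_zero: "phi i 0 = 0"
  using phi_add[OF E0 E0, of i] by simp

lemma phi_sum: "finite S \<Longrightarrow> (\<forall>j\<in>S. F j \<in> E) \<Longrightarrow> phi i (sum F S) = (\<Sum>j\<in>S. phi i (F j))"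
proof (induct S rule: finite_induct)
  case empty then show ?case by (simp add: phi_zero)
next
  case (insert k S)
  have "sum F S \<in> E" using insert by (intro Esum) auto
  then show ?case using insert by (simp add: phi_add)
qed

lemma recon:
  assumes x: "x \<in> E" shows "(\<Sum>i<n. b i * phi i x) = x"
proof -
  define f where "f = rep x"
  have f: "f \<in> free_ab E' A" "mult_eval f = x" using rep_ok[OF x] unfolding f_def by auto
  let ?S = "{p. f p \<noteq> 0}"
  have fin: "finite ?S" using free_ab_fs[OF f(1)] unfolding fs_def .
  have "(\<Sum>i<n. b i * phi i x) = (\<Sum>i<n. \<Sum>p\<in>?S. b i * (of_int (f p) * (\<iota> (fst p) i * snd p)))"
    unfolding phi_def f_def[symmetric] Phi_def Lsum_def by (simp add: sum_distrib_left)
  also have "\<dots> = (\<Sum>p\<in>?S. \<Sum>i<n. b i * (of_int (f p) * (\<iota> (fst p) i * snd p)))"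
    by (rule sum.swap)
  also have "\<dots> = (\<Sum>p\<in>?S. of_int (f p) * (fst p * snd p))"
  proof (rule sum.cong[OF refl])
    fix p assume "p \<in> ?S"
    then have m: "fst p \<in> E'" using free_ab_mem[OF f(1)] by auto
    have "(\<Sum>i<n. b i * (of_int (f p) * (\<iota> (fst p) i * snd p)))
        = (\<Sum>i<n. of_int (f p) * ((b i * \<iota> (fst p) i) * snd p))"
      by (simp add: ofint_comm3 mult.assoc)
    also have "\<dots> = of_int (f p) * ((\<Sum>i<n. b i * \<iota> (fst p) i) * snd p)"
      by (simp add: sum_distrib_left sum_distrib_right)
    also have "\<dots> = of_int (f p) * (fst p * snd p)" using E'_expand[OF m] by simp
    finally show "(\<Sum>i<n. b i * (of_int (f p) * (\<iota> (fst p) i * snd p))) = of_int (f p) * (fst p * snd p)" .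
  qed
  also have "\<dots> = x" using f(2) unfolding mult_eval_def .
  finally show ?thesis .
qed

abbreviation "ZE \<equiv> center_mod A E"
abbreviation "Z \<equiv> center A"

lemma ZE_E: "x \<in> ZE \<Longrightarrow> x \<in> E" unfolding center_mod_def by blast
lemma ZE_c: "x \<in> ZE \<Longrightarrow> a \<in> A \<Longrightarrow> x * a = a * x" unfolding center_mod_def by blast
lemma Z_A: "x \<in> Z \<Longrightarrow> x \<in> A" unfolding center_mod_def by blast
lemma Z_c: "x \<in> Z \<Longrightarrow> a \<in> A \<Longrightarrow> x * a = a * x" unfolding center_mod_def by blast
lemma ZE_0: "0 \<in> ZE" unfolding center_mod_def using E0 by simp
lemma ZE_add: "x \<in> ZE \<Longrightarrow> y \<in> ZE \<Longrightarrow> x + y \<in> ZE"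
  unfolding center_mod_def using Eadd by (simp add: distrib_left distrib_right)
lemma ZE_scale:
  assumes x: "x \<in> ZE" and r: "r \<in> Z" shows "x * r \<in> ZE"
proof -
  have "x * r \<in> E" using Eright[OF ZE_E[OF x] Z_A[OF r]] .
  moreover have "x * r * a = a * (x * r)" if a: "a \<in> A" for a
  proof -
    have "x * r * a = x * (a * r)" using Z_c[OF r a] by (simp add: mult.assoc)
    also have "\<dots> = (a * x) * r" using ZE_c[OF x a] by (simp add: mult.assoc[symmetric])
    finally show ?thesis by (simp add: mult.assoc)
  qed
  ultimately show ?thesis unfolding center_mod_def by blast
qed
lemma ZE_sum: "finite S \<Longrightarrow> (\<forall>i\<in>S. F i \<in> ZE) \<Longrightarrow> sum F S \<in> ZE"
  by (induct S rule: finite_induct) (auto simp: ZE_0 ZE_add)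

lemma b_ZE: "i < n \<Longrightarrow> b i \<in> ZE" using b_in E'Z by blast

lemma phi_central:
  assumes x: "x \<in> ZE" shows "phi i x \<in> Z"
proof -
  have xE: "x \<in> E" by (rule ZE_E[OF x])
  have "phi i x * a = a * phi i x" if a: "a \<in> A" for a
    using phi_right[OF xE a] phi_left[OF xE a] ZE_c[OF x a] by simp
  then show ?thesis using phi_A[OF xE] unfolding center_mod_def by blast
qed

lemma fgp: "fg_proj Z ZE"
proof -
  have sub: "submod Z ZE" unfolding submod_def using ZE_0 ZE_add ZE_scale by blast
  have c1: "\<forall>x\<in>ZE. (\<lambda>i. phi i x) \<in> free_mod Z n"
    unfolding free_mod_def using phi_central phi_big ZE_E by blast
  have c2: "\<forall>x\<in>ZE. \<forall>y\<in>ZE. (\<lambda>i. phi i (x + y)) = (\<lambda>i. phi i x + phi i y)"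
    using phi_add ZE_E by blast
  have c3: "\<forall>x\<in>ZE. \<forall>r\<in>Z. (\<lambda>i. phi i (x * r)) = (\<lambda>i. phi i x * r)"
    using phi_right ZE_E Z_A by blast
  have c4: "\<forall>v\<in>free_mod Z n. (\<Sum>i<n. b i * v i) \<in> ZE"
  proof
    fix v assume "v \<in> free_mod Z n"
    then have "v i \<in> Z" for i unfolding free_mod_def by blast
    then show "(\<Sum>i<n. b i * v i) \<in> ZE" by (intro ZE_sum) (auto intro: ZE_scale b_ZE)
  qed
  have c5: "\<forall>v\<in>free_mod Z n. \<forall>w\<in>free_mod Z n. (\<Sum>i<n. b i * (v i + w i)) = (\<Sum>i<n. b i * v i) + (\<Sum>i<n. b i * w i)"
    by (simp add: distrib_left sum.distrib)
  have c6: "\<forall>v\<in>free_mod Z n. \<forall>r\<in>Z. (\<Sum>i<n. b i * (v i * r)) = (\<Sum>i<n. b i * v i) * r"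
    by (simp add: sum_distrib_right mult.assoc)
  have c7: "\<forall>x\<in>ZE. (\<Sum>i<n. b i * phi i x) = x" using recon ZE_E by blast
  show ?thesis unfolding fg_proj_def
    apply (rule conjI[OF sub])
    apply (rule exI[where x=n], rule exI[where x="\<lambda>x i. phi i x"], rule exI[where x="\<lambda>v. \<Sum>i<n. b i * v i"])
    apply (intro conjI)
    using c1 c2 c3 c4 c5 c6 c7 by simp_all
qed

end


context bw
begin

interpretation A: subalg sc st A using cs sA by unfold_locales

lemma iso2: "mult_tensor_iso Z ZE A E"
  unfolding mult_tensor_iso_def
proof (intro conjI)
  show "\<forall>m\<in>ZE. \<forall>a\<in>A. m * a \<in> E" using Eright ZE_E by blast
  show "\<forall>x\<in>E. \<exists>f\<in>free_ab ZE A. mult_eval f = x"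
  proof
    fix x assume x: "x \<in> E"
    define f where "f = (\<lambda>q. \<Sum>i<n. 1 * delta (b i, phi i x) q)"
    have "f \<in> free_ab ZE A"
    proof (rule free_abI)
      show "fs f" unfolding f_def by (rule fs_comb) simp
      fix q assume "f q \<noteq> 0"
      then have "\<exists>i\<in>{..<n}. q = (b i, phi i x)" unfolding f_def by (rule comb_nz)
      then obtain i where "i \<in> {..<n}" "q = (b i, phi i x)" by blast
      then show "fst q \<in> ZE \<and> snd q \<in> A" using b_ZE phi_A[OF x] by auto
    qed
    moreover have "mult_eval f = x"
      unfolding f_def mult_eval_Lsum Lsum_comb[OF finite_lessThan] using recon[OF x] by simp
    ultimately show "\<exists>f\<in>free_ab ZE A. mult_eval f = x" by blast
  qed
  show "\<forall>f\<in>free_ab ZE A. mult_eval f = 0 \<longrightarrow> f \<in> tensor_rel Z ZE A"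
  proof (intro ballI impI)
    fix f assume f: "f \<in> free_ab ZE A" and f0: "mult_eval f = 0"
    let ?S = "{p. f p \<noteq> 0}"
    have fin: "finite ?S" using free_ab_fs[OF f] unfolding fs_def .
    have mem: "p \<in> ?S \<Longrightarrow> fst p \<in> ZE \<and> snd p \<in> A" for p using free_ab_mem[OF f] by blast
    define c where "c p = of_int (f p) * snd p" for p
    define y where "y p i = phi i (fst p) * c p" for p i
    have cA: "p \<in> ?S \<Longrightarrow> c p \<in> A" for p unfolding c_def using mem A.Sofint by blast
    have N0: "0 \<in> A" by (rule A.S0)
    have Nadd: "\<And>x y. x \<in> A \<Longrightarrow> y \<in> A \<Longrightarrow> x + y \<in> A" by (rule A.Sadd)
    have Nneg: "\<And>x. x \<in> A \<Longrightarrow> - x \<in> A" by (rule A.Sneg)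
    have Madd: "\<And>x y. x \<in> ZE \<Longrightarrow> y \<in> ZE \<Longrightarrow> x + y \<in> ZE" by (rule ZE_add)
    have yA: "p \<in> ?S \<Longrightarrow> i < n \<Longrightarrow> y p i \<in> A" for p i
      unfolding y_def using A.Smult[OF Z_A[OF phi_central] cA] mem by blast
    have s1: "f = (\<lambda>q. \<Sum>p\<in>?S. f p * delta p q)"
    proof
      fix q
      have "(\<Sum>p\<in>?S. f p * delta p q) = (\<Sum>p\<in>?S. if p = q then f q else 0)"
        by (rule sum.cong) (auto simp: delta_def)
      also have "\<dots> = f q" using fin by (simp add: sum.delta')
      finally show "f q = (\<Sum>p\<in>?S. f p * delta p q)" by simp
    qed
    have s2: "teq Z ZE A (\<lambda>q. \<Sum>p\<in>?S. f p * delta p q) (\<lambda>q. \<Sum>p\<in>?S. delta (fst p, c p) q)"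
    proof (rule teq_sum[OF fin], rule ballI)
      fix p assume p: "p \<in> ?S"
      have "teq Z ZE A (\<lambda>q. f p * delta (fst p, snd p) q) (delta (fst p, of_int (f p) * snd p))"
        by (rule delta_scale[OF N0 Nadd Nneg]) (use mem[OF p] in auto)
      then show "teq Z ZE A (\<lambda>q. f p * delta p q) (delta (fst p, c p))"
        unfolding c_def by simp
    qed
    have s3: "teq Z ZE A (\<lambda>q. \<Sum>p\<in>?S. delta (fst p, c p) q) (\<lambda>q. \<Sum>p\<in>?S. \<Sum>i<n. delta (b i, y p i) q)"
    proof (rule teq_sum[OF fin], rule ballI)
      fix p assume p: "p \<in> ?S"
      have m: "fst p \<in> ZE" "c p \<in> A" using mem[OF p] cA[OF p] by auto
      have xi: "\<forall>i\<in>{..<n}. b i * phi i (fst p) \<in> ZE"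
        using ZE_scale[OF b_ZE phi_central[OF m(1)]] by blast
      have "teq Z ZE A (delta (\<Sum>i<n. b i * phi i (fst p), c p)) (\<lambda>q. \<Sum>i<n. delta (b i * phi i (fst p), c p) q)"
        by (rule delta_sum_left[OF finite_lessThan ZE_0 Madd xi m(2)])
      then have t1: "teq Z ZE A (delta (fst p, c p)) (\<lambda>q. \<Sum>i<n. delta (b i * phi i (fst p), c p) q)"
        by (simp only: recon[OF ZE_E[OF m(1)]])
      have t2: "teq Z ZE A (\<lambda>q. \<Sum>i<n. delta (b i * phi i (fst p), c p) q) (\<lambda>q. \<Sum>i<n. delta (b i, y p i) q)"
      proof (rule teq_sum[OF finite_lessThan], rule ballI)
        fix i assume "i \<in> {..<n}"
        then show "teq Z ZE A (delta (b i * phi i (fst p), c p)) (delta (b i, y p i))"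
          unfolding y_def by (intro delta_bal b_ZE phi_central m) simp
      qed
      show "teq Z ZE A (delta (fst p, c p)) (\<lambda>q. \<Sum>i<n. delta (b i, y p i) q)"
        by (rule teq_trans[OF t1 t2])
    qed
    have s4: "(\<lambda>q. \<Sum>p\<in>?S. \<Sum>i<n. delta (b i, y p i) q) = (\<lambda>q. \<Sum>i<n. \<Sum>p\<in>?S. delta (b i, y p i) q)"
      by (rule ext, rule sum.swap)
    have s5: "teq Z ZE A (\<lambda>q. \<Sum>i<n. \<Sum>p\<in>?S. delta (b i, y p i) q) (\<lambda>q. \<Sum>i<n. delta (b i, \<Sum>p\<in>?S. y p i) q)"
    proof (rule teq_sum[OF finite_lessThan], rule ballI)
      fix i assume i: "i \<in> {..<n}"
      have "teq Z ZE A (delta (b i, \<Sum>p\<in>?S. y p i)) (\<lambda>q. \<Sum>p\<in>?S. delta (b i, y p i) q)"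
        by (rule delta_sum_right[OF fin N0 Nadd]) (use yA i b_ZE in auto)
      then show "teq Z ZE A (\<lambda>q. \<Sum>p\<in>?S. delta (b i, y p i) q) (delta (b i, \<Sum>p\<in>?S. y p i))"
        by (rule teq_sym)
    qed
    have s6: "(\<Sum>p\<in>?S. y p i) = 0" for i
    proof -
      have "(\<Sum>p\<in>?S. y p i) = (\<Sum>p\<in>?S. phi i (fst p * c p))"
      proof (rule sum.cong[OF refl])
        fix p assume p: "p \<in> ?S"
        show "y p i = phi i (fst p * c p)" unfolding y_def
          using phi_right[OF ZE_E cA[OF p]] mem[OF p] by simp
      qed
      also have "\<dots> = phi i (\<Sum>p\<in>?S. fst p * c p)"
        by (rule phi_sum[symmetric, OF fin]) (use Eright ZE_E mem cA in blast)
      also have "(\<Sum>p\<in>?S. fst p * c p) = mult_eval f"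
        unfolding mult_eval_def c_def by (rule sum.cong[OF refl]) (simp add: ofint_comm3)
      finally show ?thesis using f0 phi_zero by simp
    qed
    have s7: "(\<lambda>q. \<Sum>i<n. delta (b i, 0) q) \<in> tensor_rel Z ZE A"
      by (rule T_sum[OF finite_lessThan]) (use delta0_right b_ZE N0 in blast)
    have s3': "teq Z ZE A (\<lambda>q. \<Sum>p\<in>?S. delta (fst p, c p) q) (\<lambda>q. \<Sum>i<n. \<Sum>p\<in>?S. delta (b i, y p i) q)"
      using s3 unfolding s4 .
    have s5': "teq Z ZE A (\<lambda>q. \<Sum>i<n. \<Sum>p\<in>?S. delta (b i, y p i) q) (\<lambda>q. \<Sum>i<n. delta (b i, 0) q)"
      using s5 unfolding s6 .
    have "teq Z ZE A f (\<lambda>q. \<Sum>i<n. delta (b i, 0) q)"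
      using teq_trans[OF teq_trans[OF s2 s3'] s5'] unfolding s1[symmetric] .
    then show "f \<in> tensor_rel Z ZE A"
      using teq_trans s7 unfolding T_teq0 by blast
  qed
qed

lemma III: "assumption_III A E"
  unfolding assumption_III_def using fgp iso2 by blast

end



lemma cs_st_mult: "cstar_alg sc st \<Longrightarrow> st (x * y) = st y * st x"
  unfolding cstar_alg_def by blast
lemma cs_st_st: "cstar_alg sc st \<Longrightarrow> st (st x) = x"
  unfolding cstar_alg_def by blast

lemma cm: "x \<in> center_mod A E \<Longrightarrow> a \<in> A \<Longrightarrow> x * a = a * x" unfolding center_mod_def by blast
lemma cmE: "x \<in> center_mod A E \<Longrightarrow> x \<in> E" unfolding center_mod_def by blast
lemma cmI: "x \<in> E \<Longrightarrow> (\<And>a. a \<in> A \<Longrightarrow> x * a = a * x) \<Longrightarrow> x \<in> center_mod A E"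
  unfolding center_mod_def by blast

lemma center_subalg:
  assumes cs: "cstar_alg sc st" and sA: "unital_star_subalg sc st A"
  shows "unital_star_subalg sc st (center A)"
proof -
  interpret A: subalg sc st A using cs sA by unfold_locales
  have Ast: "x \<in> A \<Longrightarrow> st x \<in> A" for x using sA unfolding unital_star_subalg_def by blast
  have one: "1 \<in> center A" by (rule cmI[OF A.S1]) simp
  have add: "x + y \<in> center A" if x: "x \<in> center A" and y: "y \<in> center A" for x y
  proof (rule cmI)
    show "x + y \<in> A" by (rule A.Sadd[OF cmE[OF x] cmE[OF y]])
    fix a assume a: "a \<in> A"
    show "(x + y) * a = a * (x + y)" unfolding distrib_left distrib_right cm[OF x a] cm[OF y a] ..
  qed
  have mul: "x * y \<in> center A" if x: "x \<in> center A" and y: "y \<in> center A" for x y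
  proof (rule cmI)
    show "x * y \<in> A" by (rule A.Smult[OF cmE[OF x] cmE[OF y]])
    fix a assume a: "a \<in> A"
    have "x * y * a = x * (a * y)" unfolding mult.assoc cm[OF y a] ..
    also have "\<dots> = (a * x) * y" unfolding mult.assoc[symmetric] cm[OF x a] ..
    finally show "x * y * a = a * (x * y)" unfolding mult.assoc .
  qed
  have scl: "sc c * x \<in> center A" if x: "x \<in> center A" for c x
  proof (rule cmI)
    show "sc c * x \<in> A" by (rule A.Ssc[OF cmE[OF x]])
    fix a assume a: "a \<in> A"
    have "sc c * x * a = sc c * (a * x)" unfolding mult.assoc cm[OF x a] ..
    also have "\<dots> = (sc c * a) * x" unfolding mult.assoc ..
    also have "\<dots> = (a * sc c) * x" unfolding cs_comm[OF cs, of c a] ..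
    finally show "sc c * x * a = a * (sc c * x)" unfolding mult.assoc .
  qed
  have stc: "st x \<in> center A" if x: "x \<in> center A" for x
  proof (rule cmI)
    show "st x \<in> A" by (rule Ast[OF cmE[OF x]])
    fix a assume a: "a \<in> A"
    have "st x * a = st x * st (st a)" unfolding cs_st_st[OF cs] ..
    also have "\<dots> = st (st a * x)" unfolding cs_st_mult[OF cs] ..
    also have "st a * x = x * st a" using cm[OF x Ast[OF a]] by (rule sym)
    also have "st (x * st a) = st (st a) * st x" by (rule cs_st_mult[OF cs])
    also have "\<dots> = a * st x" unfolding cs_st_st[OF cs] ..
    finally show "st x * a = a * st x" .
  qed
  show ?thesis unfolding unital_star_subalg_def
  proof (intro conjI ballI allI)
    show "1 \<in> center A" by (rule one)
  next
    fix x y assume "x \<in> center A" "y \<in> center A"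
    then show "x + y \<in> center A" "x * y \<in> center A" by (rule add, rule mul)
  next
    fix c x assume "x \<in> center A" then show "sc c * x \<in> center A" by (rule scl)
  next
    fix x assume "x \<in> center A" then show "st x \<in> center A" by (rule stc)
  qed
qed

lemma of_right:
  assumes cs: "cstar_alg sc st" and sA: "unital_star_subalg sc st A" and dd: "derivation_on sc A d"
    and x: "x \<in> one_forms sc A d" and a: "a \<in> A"
  shows "x * a \<in> one_forms sc A d"
proof -
  interpret A: subalg sc st A using cs sA by unfold_locales
  show ?thesis using x unfolding one_forms_def
  proof (induct rule: cspan.induct)
    case cspan_zero then show ?case by (simp add: cspan.cspan_zero)
  next
    case (cspan_gen g)
    then obtain a1 b1 where g: "g = a1 * d b1" "a1 \<in> A" "b1 \<in> A" by blast
    have der: "d (b1 * a) = b1 * d a + d b1 * a" using dd g(3) a unfolding derivation_on_def by blast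
    have eq: "g * a = a1 * d (b1 * a) + sc (-1) * ((a1 * b1) * d a)"
      unfolding g(1) der sc_neg1[OF cs] by (simp add: algebra_simps)
    have 1: "a1 * d (b1 * a) \<in> cspan sc {a * d b |a b. a \<in> A \<and> b \<in> A}"
      by (rule cspan.cspan_gen) (use g A.Smult a in blast)
    have 2: "(a1 * b1) * d a \<in> cspan sc {a * d b |a b. a \<in> A \<and> b \<in> A}"
      by (rule cspan.cspan_gen) (use g A.Smult a in blast)
    show ?case unfolding eq by (rule cspan.cspan_add[OF 1 cspan.cspan_scale[OF 2]])
  next
    case (cspan_add x y) then show ?case by (simp add: distrib_right cspan.cspan_add)
  next
    case (cspan_scale x c) then show ?case by (simp add: mult.assoc cspan.cspan_scale)
  qed
qed

theorem proposition4p17: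
  fixes sc :: "complex \<Rightarrow> 'b::ring_1" and st :: "'b \<Rightarrow> 'b"
    and A :: "'b set" and d :: "'b \<Rightarrow> 'b"
  assumes "cstar_alg sc st"
    and "unital_star_subalg sc st A"
    and "derivation_on sc A d"
  shows "assumption_III A (one_forms sc A d) \<longleftrightarrow> assumption_III' sc st A (one_forms sc A d)"
proof
  let ?E = "one_forms sc A d"
  assume III: "assumption_III A ?E"
  then have fg: "fg_proj (center A) (center_mod A ?E)" and isoh: "mult_tensor_iso (center A) (center_mod A ?E) A ?E"
    unfolding assumption_III_def by auto
  have sub: "submod (center A) (center_mod A ?E)" using fg unfolding fg_proj_def by blast
  show "assumption_III' sc st A ?E"
    unfolding assumption_III'_def
    apply (rule exI[where x="center A"], rule exI[where x="center_mod A ?E"])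
    apply (intro conjI center_subalg[OF assms(1,2)] order_refl sub fg isoh)
    done
next
  let ?E = "one_forms sc A d"
  assume "assumption_III' sc st A ?E"
  then obtain A' E' where sA': "unital_star_subalg sc st A'" and A'Z: "A' \<subseteq> center A"
    and E'Z: "E' \<subseteq> center_mod A ?E" and fg: "fg_proj A' E'" and isoh: "mult_tensor_iso A' E' A ?E"
    unfolding assumption_III'_def by (elim exE conjE)
  have "\<exists>(n::nat) (\<iota>::'b \<Rightarrow> nat \<Rightarrow> 'b) (\<pi>::(nat \<Rightarrow> 'b) \<Rightarrow> 'b).
        (\<forall>x\<in>E'. \<iota> x \<in> free_mod A' n)
      \<and> (\<forall>x\<in>E'. \<forall>y\<in>E'. \<iota> (x + y) = (\<lambda>i. \<iota> x i + \<iota> y i))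
      \<and> (\<forall>x\<in>E'. \<forall>r\<in>A'. \<iota> (x * r) = (\<lambda>i. \<iota> x i * r))
      \<and> (\<forall>v\<in>free_mod A' n. \<pi> v \<in> E')
      \<and> (\<forall>v\<in>free_mod A' n. \<forall>w\<in>free_mod A' n. \<pi> (\<lambda>i. v i + w i) = \<pi> v + \<pi> w)
      \<and> (\<forall>v\<in>free_mod A' n. \<forall>r\<in>A'. \<pi> (\<lambda>i. v i * r) = \<pi> v * r)
      \<and> (\<forall>x\<in>E'. \<pi> (\<iota> x) = x)"
    using fg unfolding fg_proj_def by (rule conjunct2)
  then obtain n \<iota> \<pi> where
        h1: "\<forall>x\<in>E'. \<iota> x \<in> free_mod A' n"
    and h2: "\<forall>x\<in>E'. \<forall>y\<in>E'. \<iota> (x + y) = (\<lambda>i. \<iota> x i + \<iota> y i)"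
    and h3: "\<forall>x\<in>E'. \<forall>r\<in>A'. \<iota> (x * r) = (\<lambda>i. \<iota> x i * r)"
    and h4: "\<forall>v\<in>free_mod A' n. \<pi> v \<in> E'"
    and h5: "\<forall>v\<in>free_mod A' n. \<forall>w\<in>free_mod A' n. \<pi> (\<lambda>i. v i + w i) = \<pi> v + \<pi> w"
    and h6: "\<forall>v\<in>free_mod A' n. \<forall>r\<in>A'. \<pi> (\<lambda>i. v i * r) = \<pi> v * r"
    and h7: "\<forall>x\<in>E'. \<pi> (\<iota> x) = x"
    by (elim exE conjE)
  have "bw sc st A ?E A' E' n \<iota> \<pi>"
  proof (rule bw.intro)
    show "0 \<in> ?E" unfolding one_forms_def by (rule cspan.cspan_zero)
    show "\<And>x y. x \<in> ?E \<Longrightarrow> y \<in> ?E \<Longrightarrow> x + y \<in> ?E" unfolding one_forms_def by (rule cspan.cspan_add)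
    show "\<And>x a. x \<in> ?E \<Longrightarrow> a \<in> A \<Longrightarrow> x * a \<in> ?E" by (rule of_right[OF assms])
    show "cstar_alg sc st" by (rule assms(1))
    show "unital_star_subalg sc st A" by (rule assms(2))
    show "unital_star_subalg sc st A'" by (rule sA')
    show "A' \<subseteq> center A" by (rule A'Z)
    show "E' \<subseteq> center_mod A ?E" by (rule E'Z)
    show "\<And>x. x \<in> E' \<Longrightarrow> \<iota> x \<in> free_mod A' n" using h1 by (rule bspec)
    show "\<And>x y. x \<in> E' \<Longrightarrow> y \<in> E' \<Longrightarrow> \<iota> (x + y) = (\<lambda>i. \<iota> x i + \<iota> y i)" using h2 by simp
    show "\<And>x r. x \<in> E' \<Longrightarrow> r \<in> A' \<Longrightarrow> \<iota> (x * r) = (\<lambda>i. \<iota> x i * r)" using h3 by simp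
    show "\<And>v. v \<in> free_mod A' n \<Longrightarrow> \<pi> v \<in> E'" using h4 by (rule bspec)
    show "\<And>v w. v \<in> free_mod A' n \<Longrightarrow> w \<in> free_mod A' n \<Longrightarrow> \<pi> (\<lambda>i. v i + w i) = \<pi> v + \<pi> w" using h5 by simp
    show "\<And>v r. v \<in> free_mod A' n \<Longrightarrow> r \<in> A' \<Longrightarrow> \<pi> (\<lambda>i. v i * r) = \<pi> v * r" using h6 by simp
    show "\<And>x. x \<in> E' \<Longrightarrow> \<pi> (\<iota> x) = x" using h7 by simp
    show "mult_tensor_iso A' E' A ?E" by (rule isoh)
  qed
  then show "assumption_III A ?E" by (rule bw.III)
qed


end
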